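(* Let $G=(V,\Sigma,R,S)$ be a context-free grammar in Greibach Normal Form. For all $w,z\in\Sigma^*$: if $\pi_S(w)=\pi_S(z)$, then $w\backslash L(G)=z\backslash L(G)$.
   Context: A context-free grammar $G=(V,\Sigma,R,S)$ in Greibach Normal Form has every production of the form $S\to\epsilon$ or $A\to a\,\beta$ with $a\in\Sigma$, $\beta\in(V\setminus\{S\})^*$; $L(G)$ is its language. Let $\delta_G(a,A)=\{\beta\in V^*:(A\to a\,\beta)\in R\}$. Define $\pi:\Sigma^*\times V^*\to\mathcal{P}(V^* )$ recursively by $\pi(t,\alpha)=\{\alpha\}$ if $t=\epsilon$; $\pi(t,\alpha)=\emptyset$ if $t\neq\epsilon$ and $\alpha=\epsilon$; and otherwise $\pi(t,\alpha)=\bigcup_{\beta\in\delta_G(t_0,\alpha_0)}\pi(t_{1:},\beta\alpha_{1:})$, where $t_0$ is the first character of $t$, $t_{1:}$ the rest of $t$, $\alpha_0$ the first symbol of $\alpha$ and $\alpha_{1:}$ the rest of $\alpha$. Let $\pi_S(t)=\pi(t,S)$ (the stack consisting of the single symbol $S$). A string $x$ belongs to $L(G)$ iff $\epsilon\in\pi_S(x)$. The left quotient of a language $L$ by $w\in\Sigma^*$ is $w\backslash L=\{z\in\Sigma^*: wz\in L\}$. *)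

theory Defs
  imports Main
begin

datatype ('n, 'a) sym = NT 'n | T 'a

text \<open>A context-free grammar (V, Sigma, R, S): nonterminals of type 'n (V = UNIV or the set
  of nonterminals occurring), terminals of type 'a, a finite set of productions, start symbol.\<close>
record ('n, 'a) cfg =
  prods :: "('n \<times> ('n, 'a) sym list) set"
  start :: 'n

inductive derive1 :: "('n, 'a) cfg \<Rightarrow> ('n, 'a) sym list \<Rightarrow> ('n, 'a) sym list \<Rightarrow> bool"
  for G where
  "(A, \<gamma>) \<in> prods G \<Longrightarrow> derive1 G (u @ [NT A] @ v) (u @ \<gamma> @ v)"

definition lang :: "('n, 'a) cfg \<Rightarrow> 'a list set" where
  "lang G = {w. (derive1 G)\<^sup>*\<^sup>* [NT (start G)] (map T w)}"

definition gnf :: "('n, 'a) cfg \<Rightarrow> bool" where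
  "gnf G \<longleftrightarrow> finite (prods G) \<and>
     (\<forall>(A, \<gamma>) \<in> prods G.
        (A = start G \<and> \<gamma> = []) \<or>
        (\<exists>a \<beta>. \<gamma> = T a # map NT \<beta> \<and> start G \<notin> set \<beta>))"

definition delta :: "('n, 'a) cfg \<Rightarrow> 'a \<Rightarrow> 'n \<Rightarrow> 'n list set" where
  "delta G a A = {\<beta>. (A, T a # map NT \<beta>) \<in> prods G}"

fun pi :: "('n, 'a) cfg \<Rightarrow> 'a list \<Rightarrow> 'n list \<Rightarrow> 'n list set" where
  "pi G [] \<alpha> = {\<alpha>}"
| "pi G (t # ts) [] = {}"
| "pi G (t # ts) (A # \<alpha>) = (\<Union>\<beta> \<in> delta G t A. pi G ts (\<beta> @ \<alpha>))"

definition pi_S :: "('n, 'a) cfg \<Rightarrow> 'a list \<Rightarrow> 'n list set" where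
  "pi_S G t = pi G t [start G]"

definition left_quotient :: "'a list \<Rightarrow> 'a list set \<Rightarrow> 'a list set" where
  "left_quotient w L = {z. w @ z \<in> L}"

end

theory Submission
  imports Defs
begin

inductive gen :: "('n, 'a) cfg \<Rightarrow> ('n, 'a) sym list \<Rightarrow> 'a list \<Rightarrow> bool" for G where
  gnil: "gen G [] []"
| gT: "gen G xs w \<Longrightarrow> gen G (T a # xs) (a # w)"
| gNT: "(A, \<gamma>) \<in> prods G \<Longrightarrow> gen G \<gamma> w1 \<Longrightarrow> gen G xs w2 \<Longrightarrow> gen G (NT A # xs) (w1 @ w2)"

lemma gen_append:
  "gen G (xs @ ys) w \<longleftrightarrow> (\<exists>w1 w2. w = w1 @ w2 \<and> gen G xs w1 \<and> gen G ys w2)"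
proof (induction xs arbitrary: w)
  case Nil
  then show ?case by (auto intro: gnil elim: gen.cases)
next
  case (Cons x xs)
  show ?case
  proof
    assume "gen G ((x # xs) @ ys) w"
    then show "\<exists>w1 w2. w = w1 @ w2 \<and> gen G (x # xs) w1 \<and> gen G ys w2"
    proof (cases rule: gen.cases)
      case (gT xs' w' a)
      then obtain u v where "w' = u @ v" "gen G xs u" "gen G ys v" using Cons by auto
      then have "w = (a # u) @ v \<and> gen G (x # xs) (a # u) \<and> gen G ys v" using gT by (auto intro: gen.gT)
      then show ?thesis by blast
    next
      case (gNT A \<gamma> w1 xs' w2)
      then obtain u v where "w2 = u @ v" "gen G xs u" "gen G ys v" using Cons by auto
      then have "w = (w1 @ u) @ v \<and> gen G (x # xs) (w1 @ u) \<and> gen G ys v" using gNT by (auto intro: gen.gNT)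
      then show ?thesis by blast
    qed auto
  next
    assume "\<exists>w1 w2. w = w1 @ w2 \<and> gen G (x # xs) w1 \<and> gen G ys w2"
    then obtain w1 w2 where h: "w = w1 @ w2" "gen G (x # xs) w1" "gen G ys w2" by blast
    from h(2) show "gen G ((x # xs) @ ys) w"
    proof (cases rule: gen.cases)
      case (gT w' a)
      then have "gen G (xs @ ys) (w' @ w2)" using Cons h by auto
      then show ?thesis using gT h by (auto intro: gen.gT)
    next
      case (gNT A \<gamma> u v)
      then have "gen G (xs @ ys) (v @ w2)" using Cons h by auto
      then have "gen G (NT A # xs @ ys) (u @ (v @ w2))" using gNT by (auto intro: gen.gNT)
      then show ?thesis using gNT h by simp
    qed
  qed
qed

lemma derive_gen:
  assumes "(derive1 G)\<^sup>*\<^sup>* xs ys" "ys = map T w"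
  shows "gen G xs w"
  using assms
proof (induction arbitrary: w rule: converse_rtranclp_induct)
  case base
  have "gen G (map T w) w" by (induction w) (auto intro: gen.intros)
  then show ?case using base by simp
next
  case (step xs zs)
  then have g: "gen G zs w" by auto
  from step(1) obtain u A v \<gamma> where e: "xs = u @ [NT A] @ v" "zs = u @ \<gamma> @ v" "(A, \<gamma>) \<in> prods G"
    by (auto elim: derive1.cases)
  from g e obtain w1 w2 w3 where "w = w1 @ w2 @ w3" "gen G u w1" "gen G \<gamma> w2" "gen G v w3"
    by (auto simp: gen_append)
  moreover have "gen G (NT A # v) (w2 @ w3)" using calculation e by (auto intro: gNT)
  ultimately show ?case using e gen_append[of G u "NT A # v"] by auto
qed

lemma gnf_prod:
  assumes "gnf G" "(A, T a # map NT \<beta>) \<in> prods G"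
  shows "start G \<notin> set \<beta>"
proof -
  from assms obtain b \<beta>' where "T a # map NT \<beta> = T b # map NT \<beta>'" "start G \<notin> set \<beta>'"
    unfolding gnf_def by fastforce
  moreover have "inj NT" by (auto simp: inj_def)
  ultimately have "\<beta> = \<beta>'" using map_injective by auto
  then show ?thesis using \<open>start G \<notin> set \<beta>'\<close> by simp
qed

lemma gen_pi:
  assumes "gnf G" "gen G (map NT \<alpha>) y" "start G \<notin> set \<alpha>"
  shows "[] \<in> pi G y \<alpha>"
  using assms(2,3)
proof (induction y arbitrary: \<alpha> rule: length_induct)
  case (1 y)
  show ?case
  proof (cases \<alpha>)
    case Nil
    then show ?thesis using 1 by (auto elim: gen.cases)
  next
    case (Cons A \<alpha>')
    with 1(2) obtain \<gamma> w1 w2 where h: "y = w1 @ w2" "(A, \<gamma>) \<in> prods G" "gen G \<gamma> w1"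
        "gen G (map NT \<alpha>') w2"
      by (auto elim: gen.cases)
    have "A \<noteq> start G" using Cons 1 by auto
    with h(2) assms(1) obtain a \<beta> where g: "\<gamma> = T a # map NT \<beta>"
      unfolding gnf_def by fastforce
    with h(2) assms(1) have sb: "start G \<notin> set \<beta>" using gnf_prod by metis
    from h(3) g obtain w1' where w1: "w1 = a # w1'" "gen G (map NT \<beta>) w1'"
      by (auto elim: gen.cases)
    have "gen G (map NT (\<beta> @ \<alpha>')) (w1' @ w2)" using w1 h(4) gen_append by fastforce
    moreover have "length (w1' @ w2) < length y" using h w1 by simp
    ultimately have "[] \<in> pi G (w1' @ w2) (\<beta> @ \<alpha>')" using 1 sb Cons by auto
    moreover have "\<beta> \<in> delta G a A" using h g by (simp add: delta_def)
    ultimately show ?thesis using Cons h w1 by auto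
  qed
qed

lemma derive_prefix:
  "(derive1 G)\<^sup>*\<^sup>* u v \<Longrightarrow> (derive1 G)\<^sup>*\<^sup>* (p @ u) (p @ v)"
proof (induction rule: rtranclp_induct)
  case base
  then show ?case by simp
next
  case (step y z)
  from step(2) obtain u' A v' \<gamma> where "y = u' @ [NT A] @ v'" "z = u' @ \<gamma> @ v'" "(A, \<gamma>) \<in> prods G"
    by (auto elim: derive1.cases)
  then have "derive1 G ((p @ u') @ [NT A] @ v') ((p @ u') @ \<gamma> @ v')" by (intro derive1.intros)
  then show ?case using step by (simp add: \<open>y = _\<close> \<open>z = _\<close> rtranclp.rtrancl_into_rtrancl)
qed

lemma pi_derive:
  assumes "gnf G" "[] \<in> pi G y \<alpha>"
  shows "(derive1 G)\<^sup>*\<^sup>* (map NT \<alpha>) (map T y)"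
  using assms(2)
proof (induction y arbitrary: \<alpha>)
  case Nil
  then show ?case by simp
next
  case (Cons t ts)
  then obtain A \<alpha>' where a: "\<alpha> = A # \<alpha>'" by (cases \<alpha>) auto
  with Cons obtain \<beta> where b: "\<beta> \<in> delta G t A" "[] \<in> pi G ts (\<beta> @ \<alpha>')" by auto
  have "(derive1 G)\<^sup>*\<^sup>* (map NT (\<beta> @ \<alpha>')) (map T ts)" using Cons b by blast
  then have 2: "(derive1 G)\<^sup>*\<^sup>* ([T t] @ map NT (\<beta> @ \<alpha>')) ([T t] @ map T ts)"
    by (rule derive_prefix)
  have "derive1 G ([] @ [NT A] @ map NT \<alpha>') ([] @ (T t # map NT \<beta>) @ map NT \<alpha>')"
    using b by (intro derive1.intros) (simp add: delta_def)
  then show ?case using 2 a by (simp add: converse_rtranclp_into_rtranclp)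
qed

lemma pi_append: "pi G (x @ y) \<alpha> = (\<Union>\<beta> \<in> pi G x \<alpha>. pi G y \<beta>)"
proof (induction x arbitrary: \<alpha>)
  case Nil
  then show ?case by simp
next
  case (Cons t ts)
  then show ?case by (cases \<alpha>) auto
qed

lemma lang_pi:
  assumes "gnf G" "x \<noteq> []"
  shows "x \<in> lang G \<longleftrightarrow> [] \<in> pi_S G x"
proof
  assume "x \<in> lang G"
  then have "gen G [NT (start G)] x" unfolding lang_def using derive_gen by blast
  then obtain \<gamma> w1 w2 where h: "x = w1 @ w2" "(start G, \<gamma>) \<in> prods G" "gen G \<gamma> w1" "gen G [] w2"
    by (auto elim: gen.cases)
  then have "w2 = []" by (auto elim: gen.cases)
  have "\<gamma> \<noteq> []" using h assms \<open>w2 = []\<close> by (auto elim: gen.cases)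
  with h(2) assms(1) obtain a \<beta> where g: "\<gamma> = T a # map NT \<beta>"
    unfolding gnf_def by fastforce
  with h(2) assms(1) have sb: "start G \<notin> set \<beta>" using gnf_prod by metis
  from h(3) g obtain w1' where w1: "w1 = a # w1'" "gen G (map NT \<beta>) w1'"
    by (auto elim: gen.cases)
  have "[] \<in> pi G w1' \<beta>" using gen_pi[OF assms(1) w1(2) sb] .
  moreover have "\<beta> \<in> delta G a (start G)" using h g by (simp add: delta_def)
  ultimately show "[] \<in> pi_S G x" using h w1 \<open>w2 = []\<close> by (auto simp: pi_S_def)
next
  assume "[] \<in> pi_S G x"
  then have "(derive1 G)\<^sup>*\<^sup>* (map NT [start G]) (map T x)" using pi_derive[OF assms(1), of x "[start G]"]
    by (simp add: pi_S_def)
  then show "x \<in> lang G" by (simp add: lang_def)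
qed

lemma pi_noS:
  assumes "gnf G" "start G \<notin> set \<alpha>" "\<gamma> \<in> pi G z \<alpha>"
  shows "start G \<notin> set \<gamma>"
  using assms(2,3)
proof (induction z arbitrary: \<alpha>)
  case Nil
  then show ?case by simp
next
  case (Cons t ts)
  then obtain A \<alpha>' where a: "\<alpha> = A # \<alpha>'" by (cases \<alpha>) auto
  with Cons obtain \<beta> where b: "\<beta> \<in> delta G t A" "\<gamma> \<in> pi G ts (\<beta> @ \<alpha>')" by auto
  have "start G \<notin> set \<beta>" using b(1) gnf_prod[OF assms(1)] by (auto simp: delta_def)
  then have "start G \<notin> set (\<beta> @ \<alpha>')" using Cons a by auto
  then show ?case using Cons.IH b by blast
qed

lemma pi_S_nonempty:
  assumes "gnf G" "z \<noteq> []"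
  shows "[start G] \<notin> pi_S G z"
proof
  assume c: "[start G] \<in> pi_S G z"
  obtain a z' where z: "z = a # z'" using assms by (cases z) auto
  with c obtain \<beta> where b: "\<beta> \<in> delta G a (start G)" "[start G] \<in> pi G z' \<beta>"
    by (auto simp: pi_S_def)
  have "start G \<notin> set \<beta>" using b(1) gnf_prod[OF assms(1)] by (auto simp: delta_def)
  then show False using pi_noS[OF assms(1) _ b(2)] by auto
qed

theorem lemma2:
  fixes G :: "('n, 'a) cfg" and w z :: "'a list"
  assumes "gnf G"
    and "pi_S G w = pi_S G z"
  shows "left_quotient w (lang G) = left_quotient z (lang G)"
proof (cases "w = [] \<or> z = []")
  case True
  have e: "pi_S G [] = {[start G]}" by (simp add: pi_S_def)
  have "w = z"
  proof (cases "w = []")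
    case True
    then have "[start G] \<in> pi_S G z" using assms(2) e by (metis insertI1)
    then show ?thesis using True pi_S_nonempty[OF assms(1), of z] by auto
  next
    case False
    then have "z = []" using \<open>w = [] \<or> z = []\<close> by simp
    then have "[start G] \<in> pi_S G w" using assms(2) e by (metis insertI1)
    then show ?thesis using False pi_S_nonempty[OF assms(1), of w] by auto
  qed
  then show ?thesis by simp
next
  case False
  have "\<And>y. w @ y \<in> lang G \<longleftrightarrow> z @ y \<in> lang G"
    using False lang_pi[OF assms(1)] assms(2) by (simp add: pi_S_def pi_append)
  then show ?thesis by (simp add: left_quotient_def)
qed

end
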